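(* Let $\mathcal Z=(Z\to\mathbf P_{M/m})$, $\mathcal Y=(Y\to\mathbf P_{L/l})$, $\mathcal X=(X\to\mathbf P_{K/k})$ be objects of $\mathrm{bir}_G$ and let $h\colon\mathcal Z\to\mathcal Y$, $g\colon\mathcal Y\to\mathcal X$ be morphisms, $f=g\circ h$. Then: (1) if $g$ and $h$ are separated, $f$ is separated; (2) if $f$ is separated, $h$ is separated; (3) if $g$ and $h$ are proper, $f$ is proper; (4) if $f$ and $h$ are proper, $g$ is proper; (5) if $f$ is proper, $g$ is separated and $\psi_{M/m,L/l}$ is surjective (e.g. $m=l$), then $h$ is proper; (6) if $f$ is separated and $h$ is proper, then $g$ is separated.
   Context: $G$ is a commutative multiplicative group. Graded fields: nonzero $G$-graded rings whose nonzero homogeneous elements are invertible. For graded fields $k\subseteq K$, $\mathbf P_{K/k}$ is the set of graded valuation rings $\mathcal O$ of $K$ containing $k$ (graded subrings such that $f\in\mathcal O$ or $f^{-1}\in\mathcal O$ for each nonzero homogeneous $f\in K$), with topology generated by $\{\mathcal O: f_1,\dots,f_n\in\mathcal O\}$, $f_i$ homogeneous. An object of $\mathrm{bir}_G$ is $(X\to\mathbf P_{K/k})$ for some graded field extension $K/k$, with $X\to\mathbf P_{K/k}$ a local homeomorphism from a non-empty connected quasi-compact quasi-separated space. A morphism $(Y\to\mathbf P_{L/l})\to(X\to\mathbf P_{K/k})$ consists of compatible graded embeddings $k\hookrightarrow l$, $K\hookrightarrow L$ (compatible with $k\subseteq K$, $l\subseteq L$) and a continuous map $Y\to X$ compatible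 with $\psi_{L/l,K/k}\colon\mathbf P_{L/l}\to\mathbf P_{K/k}$, $\mathcal O\mapsto\mathcal O\cap K$. It is separated if $Y\to X\times_{\mathbf P_{K/k}}\mathbf P_{L/l}$ is injective, and proper if this map is bijective and $\psi_{L/l,K/k}$ is surjective. *)

theory Defs
  imports "HOL-Analysis.Analysis" "HOL-Algebra.Algebra"
begin

definition is_decomp ::
  "('g, 'x) monoid_scheme \<Rightarrow> ('a, 'm) ring_scheme \<Rightarrow> ('g \<Rightarrow> 'a set) \<Rightarrow> 'a \<Rightarrow> ('g \<Rightarrow> 'a) \<Rightarrow> bool" where
  "is_decomp \<Gamma> R D x c \<longleftrightarrow>
     (\<forall>\<gamma>. \<gamma> \<notin> carrier \<Gamma> \<longrightarrow> c \<gamma> = \<zero>\<^bsub>R\<^esub>) \<and>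
     (\<forall>\<gamma>\<in>carrier \<Gamma>. c \<gamma> \<in> D \<gamma>) \<and>
     finite {\<gamma>\<in>carrier \<Gamma>. c \<gamma> \<noteq> \<zero>\<^bsub>R\<^esub>} \<and>
     x = finsum R c {\<gamma>\<in>carrier \<Gamma>. c \<gamma> \<noteq> \<zero>\<^bsub>R\<^esub>}"

definition graded_ring ::
  "('g, 'x) monoid_scheme \<Rightarrow> ('a, 'm) ring_scheme \<Rightarrow> ('g \<Rightarrow> 'a set) \<Rightarrow> bool" where
  "graded_ring \<Gamma> R D \<longleftrightarrow>
     comm_group \<Gamma> \<and> cring R \<and>
     (\<forall>\<gamma>\<in>carrier \<Gamma>. additive_subgroup (D \<gamma>) R) \<and>
     (\<forall>\<gamma>\<in>carrier \<Gamma>. \<forall>\<delta>\<in>carrier \<Gamma>. \<forall>a\<in>D \<gamma>. \<forall>b\<in>D \<delta>.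
         a \<otimes>\<^bsub>R\<^esub> b \<in> D (\<gamma> \<otimes>\<^bsub>\<Gamma>\<^esub> \<delta>)) \<and>
     (\<forall>x\<in>carrier R. \<exists>!c. is_decomp \<Gamma> R D x c)"

definition homogeneous ::
  "('g, 'x) monoid_scheme \<Rightarrow> ('g \<Rightarrow> 'a set) \<Rightarrow> 'a \<Rightarrow> bool" where
  "homogeneous \<Gamma> D x \<longleftrightarrow> (\<exists>\<gamma>\<in>carrier \<Gamma>. x \<in> D \<gamma>)"

definition graded_field ::
  "('g, 'x) monoid_scheme \<Rightarrow> ('a, 'm) ring_scheme \<Rightarrow> ('g \<Rightarrow> 'a set) \<Rightarrow> bool" where
  "graded_field \<Gamma> R D \<longleftrightarrow> graded_ring \<Gamma> R D \<and> \<one>\<^bsub>R\<^esub> \<noteq> \<zero>\<^bsub>R\<^esub> \<and>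
     (\<forall>x\<in>carrier R. homogeneous \<Gamma> D x \<and> x \<noteq> \<zero>\<^bsub>R\<^esub> \<longrightarrow> x \<in> Units R)"

definition graded_subring ::
  "('g, 'x) monoid_scheme \<Rightarrow> ('a, 'm) ring_scheme \<Rightarrow> ('g \<Rightarrow> 'a set) \<Rightarrow> 'a set \<Rightarrow> bool" where
  "graded_subring \<Gamma> R D S \<longleftrightarrow> subring S R \<and>
     (\<forall>x\<in>S. \<forall>c. is_decomp \<Gamma> R D x c \<longrightarrow> (\<forall>\<gamma>\<in>carrier \<Gamma>. c \<gamma> \<in> S))"

definition graded_subfield ::
  "('g, 'x) monoid_scheme \<Rightarrow> ('a, 'm) ring_scheme \<Rightarrow> ('g \<Rightarrow> 'a set) \<Rightarrow> 'a set \<Rightarrow> bool" where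
  "graded_subfield \<Gamma> R D k \<longleftrightarrow> graded_subring \<Gamma> R D k \<and>
     (\<forall>x\<in>k. homogeneous \<Gamma> D x \<and> x \<noteq> \<zero>\<^bsub>R\<^esub> \<longrightarrow> inv\<^bsub>R\<^esub> x \<in> k)"

definition graded_field_ext ::
  "('g, 'x) monoid_scheme \<Rightarrow> ('a, 'm) ring_scheme \<Rightarrow> ('g \<Rightarrow> 'a set) \<Rightarrow> 'a set \<Rightarrow> bool" where
  "graded_field_ext \<Gamma> K D k \<longleftrightarrow> graded_field \<Gamma> K D \<and> graded_subfield \<Gamma> K D k"

definition graded_val_ring ::
  "('g, 'x) monoid_scheme \<Rightarrow> ('a, 'm) ring_scheme \<Rightarrow> ('g \<Rightarrow> 'a set) \<Rightarrow> 'a set \<Rightarrow> 'a set \<Rightarrow> bool" where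
  "graded_val_ring \<Gamma> K D k V \<longleftrightarrow> graded_subring \<Gamma> K D V \<and> k \<subseteq> V \<and>
     (\<forall>f\<in>carrier K. homogeneous \<Gamma> D f \<and> f \<noteq> \<zero>\<^bsub>K\<^esub> \<longrightarrow> f \<in> V \<or> inv\<^bsub>K\<^esub> f \<in> V)"

definition Pset ::
  "('g, 'x) monoid_scheme \<Rightarrow> ('a, 'm) ring_scheme \<Rightarrow> ('g \<Rightarrow> 'a set) \<Rightarrow> 'a set \<Rightarrow> 'a set set" where
  "Pset \<Gamma> K D k = {V. graded_val_ring \<Gamma> K D k V}"

definition Ptop ::
  "('g, 'x) monoid_scheme \<Rightarrow> ('a, 'm) ring_scheme \<Rightarrow> ('g \<Rightarrow> 'a set) \<Rightarrow> 'a set \<Rightarrow> 'a set topology" where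
  "Ptop \<Gamma> K D k = subtopology
     (topology_generated_by {{V. f \<in> V} | f. f \<in> carrier K \<and> homogeneous \<Gamma> D f})
     (Pset \<Gamma> K D k)"

definition quasi_separated_space :: "'x topology \<Rightarrow> bool" where
  "quasi_separated_space TX \<longleftrightarrow>
     (\<forall>U V. openin TX U \<and> compactin TX U \<and> openin TX V \<and> compactin TX V \<longrightarrow> compactin TX (U \<inter> V))"

definition local_homeomorphism_map :: "'x topology \<Rightarrow> 'y topology \<Rightarrow> ('x \<Rightarrow> 'y) \<Rightarrow> bool" where
  "local_homeomorphism_map TX T p \<longleftrightarrow> continuous_map TX T p \<and>
     (\<forall>x\<in>topspace TX. \<exists>U. openin TX U \<and> x \<in> U \<and> openin T (p ` U) \<and>
        homeomorphic_map (subtopology TX U) (subtopology T (p ` U)) p)"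

definition bir_obj ::
  "('g, 'x) monoid_scheme \<Rightarrow> ('a, 'm) ring_scheme \<Rightarrow> ('g \<Rightarrow> 'a set) \<Rightarrow> 'a set \<Rightarrow>
   'p topology \<Rightarrow> ('p \<Rightarrow> 'a set) \<Rightarrow> bool" where
  "bir_obj \<Gamma> K D k TX \<pi> \<longleftrightarrow> graded_field_ext \<Gamma> K D k \<and>
     topspace TX \<noteq> {} \<and> connected_space TX \<and> compact_space TX \<and> quasi_separated_space TX \<and>
     local_homeomorphism_map TX (Ptop \<Gamma> K D k) \<pi>"

definition graded_embedding ::
  "('g, 'x) monoid_scheme \<Rightarrow> ('a, 'm) ring_scheme \<Rightarrow> ('g \<Rightarrow> 'a set) \<Rightarrow>
   ('b, 'n) ring_scheme \<Rightarrow> ('g \<Rightarrow> 'b set) \<Rightarrow> ('a \<Rightarrow> 'b) \<Rightarrow> bool" where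
  "graded_embedding \<Gamma> K DK L DL \<phi> \<longleftrightarrow> \<phi> \<in> ring_hom K L \<and> inj_on \<phi> (carrier K) \<and>
     (\<forall>\<gamma>\<in>carrier \<Gamma>. \<phi> ` DK \<gamma> \<subseteq> DL \<gamma>)"

text \<open>psi_{L/l,K/k}: V \<mapsto> V \<inter> K (K identified with its image under \<phi>).\<close>
definition psi :: "('a, 'm) ring_scheme \<Rightarrow> ('a \<Rightarrow> 'b) \<Rightarrow> 'b set \<Rightarrow> 'a set" where
  "psi K \<phi> V = {a \<in> carrier K. \<phi> a \<in> V}"

definition bir_mor ::
  "('g, 'x) monoid_scheme \<Rightarrow>
   ('b, 'n) ring_scheme \<Rightarrow> ('g \<Rightarrow> 'b set) \<Rightarrow> 'b set \<Rightarrow> 'q topology \<Rightarrow> ('q \<Rightarrow> 'b set) \<Rightarrow>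
   ('a, 'm) ring_scheme \<Rightarrow> ('g \<Rightarrow> 'a set) \<Rightarrow> 'a set \<Rightarrow> 'p topology \<Rightarrow> ('p \<Rightarrow> 'a set) \<Rightarrow>
   ('a \<Rightarrow> 'b) \<Rightarrow> ('q \<Rightarrow> 'p) \<Rightarrow> bool" where
  "bir_mor \<Gamma> L DL l TY \<pi>TY K DK k TX \<pi>TX \<phi> u \<longleftrightarrow>
     bir_obj \<Gamma> L DL l TY \<pi>TY \<and> bir_obj \<Gamma> K DK k TX \<pi>TX \<and>
     graded_embedding \<Gamma> K DK L DL \<phi> \<and> \<phi> ` k \<subseteq> l \<and>
     continuous_map TY TX u \<and>
     (\<forall>y\<in>topspace TY. \<pi>TX (u y) = psi K \<phi> (\<pi>TY y))"

definition fibre_prod ::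
  "('b, 'n) ring_scheme \<Rightarrow> 'b set set \<Rightarrow> ('a, 'm) ring_scheme \<Rightarrow> 'p topology \<Rightarrow> ('p \<Rightarrow> 'a set) \<Rightarrow>
   ('a \<Rightarrow> 'b) \<Rightarrow> ('p \<times> 'b set) set" where
  "fibre_prod L PL K TX \<pi>TX \<phi> = {(x, V). x \<in> topspace TX \<and> V \<in> PL \<and> \<pi>TX x = psi K \<phi> V}"

definition bir_separated ::
  "('g, 'x) monoid_scheme \<Rightarrow>
   ('b, 'n) ring_scheme \<Rightarrow> ('g \<Rightarrow> 'b set) \<Rightarrow> 'b set \<Rightarrow> 'q topology \<Rightarrow> ('q \<Rightarrow> 'b set) \<Rightarrow>
   ('a, 'm) ring_scheme \<Rightarrow> ('g \<Rightarrow> 'a set) \<Rightarrow> 'a set \<Rightarrow> 'p topology \<Rightarrow> ('p \<Rightarrow> 'a set) \<Rightarrow>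
   ('a \<Rightarrow> 'b) \<Rightarrow> ('q \<Rightarrow> 'p) \<Rightarrow> bool" where
  "bir_separated \<Gamma> L DL l TY \<pi>TY K DK k TX \<pi>TX \<phi> u \<longleftrightarrow>
     inj_on (\<lambda>y. (u y, \<pi>TY y)) (topspace TY)"

definition bir_proper ::
  "('g, 'x) monoid_scheme \<Rightarrow>
   ('b, 'n) ring_scheme \<Rightarrow> ('g \<Rightarrow> 'b set) \<Rightarrow> 'b set \<Rightarrow> 'q topology \<Rightarrow> ('q \<Rightarrow> 'b set) \<Rightarrow>
   ('a, 'm) ring_scheme \<Rightarrow> ('g \<Rightarrow> 'a set) \<Rightarrow> 'a set \<Rightarrow> 'p topology \<Rightarrow> ('p \<Rightarrow> 'a set) \<Rightarrow>
   ('a \<Rightarrow> 'b) \<Rightarrow> ('q \<Rightarrow> 'p) \<Rightarrow> bool" where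
  "bir_proper \<Gamma> L DL l TY \<pi>TY K DK k TX \<pi>TX \<phi> u \<longleftrightarrow>
     bij_betw (\<lambda>y. (u y, \<pi>TY y)) (topspace TY)
        (fibre_prod L (Pset \<Gamma> L DL l) K TX \<pi>TX \<phi>) \<and>
     psi K \<phi> ` Pset \<Gamma> L DL l = Pset \<Gamma> K DK k"

end

theory Submission
  imports Defs
begin

lemma obj_pset:
  assumes "bir_obj \<Gamma> K D k TX \<pi>" "x \<in> topspace TX"
  shows "\<pi> x \<in> Pset \<Gamma> K D k"
proof -
  have "continuous_map TX (Ptop \<Gamma> K D k) \<pi>"
    using assms(1) unfolding bir_obj_def local_homeomorphism_map_def by blast
  then have "\<pi> x \<in> topspace (Ptop \<Gamma> K D k)" using assms(2) unfolding continuous_map_def by blast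
  then show ?thesis unfolding Ptop_def by simp
qed

lemma psi_comp:
  assumes "graded_embedding \<Gamma> K DK L DL \<phi>"
  shows "psi K (\<phi>h \<circ> \<phi>) W = psi K \<phi> (psi L \<phi>h W)"
proof -
  have "\<phi> \<in> carrier K \<rightarrow> carrier L" using assms unfolding graded_embedding_def ring_hom_def by blast
  then show ?thesis unfolding psi_def by auto
qed

theorem lemma7p2:
  fixes \<Gamma> :: "'g monoid"
    and M :: "'c ring" and DM :: "'g \<Rightarrow> 'c set" and m :: "'c set"
    and TZ :: "'z topology" and \<pi>TZ :: "'z \<Rightarrow> 'c set"
    and L :: "'b ring" and DL :: "'g \<Rightarrow> 'b set" and l :: "'b set"
    and TY :: "'y topology" and \<pi>TY :: "'y \<Rightarrow> 'b set"
    and K :: "'a ring" and DK :: "'g \<Rightarrow> 'a set" and k :: "'a set"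
    and TX :: "'x topology" and \<pi>TX :: "'x \<Rightarrow> 'a set"
    and \<phi>h :: "'b \<Rightarrow> 'c" and uh :: "'z \<Rightarrow> 'y"
    and \<phi>g :: "'a \<Rightarrow> 'b" and ug :: "'y \<Rightarrow> 'x"
  assumes h: "bir_mor \<Gamma> M DM m TZ \<pi>TZ L DL l TY \<pi>TY \<phi>h uh"
    and g: "bir_mor \<Gamma> L DL l TY \<pi>TY K DK k TX \<pi>TX \<phi>g ug"
  shows
    "(bir_separated \<Gamma> L DL l TY \<pi>TY K DK k TX \<pi>TX \<phi>g ug \<and>
      bir_separated \<Gamma> M DM m TZ \<pi>TZ L DL l TY \<pi>TY \<phi>h uh \<longrightarrow>
      bir_separated \<Gamma> M DM m TZ \<pi>TZ K DK k TX \<pi>TX (\<phi>h \<circ> \<phi>g) (ug \<circ> uh))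
   \<and> (bir_separated \<Gamma> M DM m TZ \<pi>TZ K DK k TX \<pi>TX (\<phi>h \<circ> \<phi>g) (ug \<circ> uh) \<longrightarrow>
      bir_separated \<Gamma> M DM m TZ \<pi>TZ L DL l TY \<pi>TY \<phi>h uh)
   \<and> (bir_proper \<Gamma> L DL l TY \<pi>TY K DK k TX \<pi>TX \<phi>g ug \<and>
      bir_proper \<Gamma> M DM m TZ \<pi>TZ L DL l TY \<pi>TY \<phi>h uh \<longrightarrow>
      bir_proper \<Gamma> M DM m TZ \<pi>TZ K DK k TX \<pi>TX (\<phi>h \<circ> \<phi>g) (ug \<circ> uh))
   \<and> (bir_proper \<Gamma> M DM m TZ \<pi>TZ K DK k TX \<pi>TX (\<phi>h \<circ> \<phi>g) (ug \<circ> uh) \<and>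
      bir_proper \<Gamma> M DM m TZ \<pi>TZ L DL l TY \<pi>TY \<phi>h uh \<longrightarrow>
      bir_proper \<Gamma> L DL l TY \<pi>TY K DK k TX \<pi>TX \<phi>g ug)
   \<and> (bir_proper \<Gamma> M DM m TZ \<pi>TZ K DK k TX \<pi>TX (\<phi>h \<circ> \<phi>g) (ug \<circ> uh) \<and>
      bir_separated \<Gamma> L DL l TY \<pi>TY K DK k TX \<pi>TX \<phi>g ug \<and>
      psi L \<phi>h ` Pset \<Gamma> M DM m = Pset \<Gamma> L DL l \<longrightarrow>
      bir_proper \<Gamma> M DM m TZ \<pi>TZ L DL l TY \<pi>TY \<phi>h uh)
   \<and> (bir_separated \<Gamma> M DM m TZ \<pi>TZ K DK k TX \<pi>TX (\<phi>h \<circ> \<phi>g) (ug \<circ> uh) \<and>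
      bir_proper \<Gamma> M DM m TZ \<pi>TZ L DL l TY \<pi>TY \<phi>h uh \<longrightarrow>
      bir_separated \<Gamma> L DL l TY \<pi>TY K DK k TX \<pi>TX \<phi>g ug)"
proof -
  have hZ: "bir_obj \<Gamma> M DM m TZ \<pi>TZ" and hY: "bir_obj \<Gamma> L DL l TY \<pi>TY"
    and hX: "bir_obj \<Gamma> K DK k TX \<pi>TX"
    and emg: "graded_embedding \<Gamma> K DK L DL \<phi>g"
    and cth: "continuous_map TZ TY uh" and ctg: "continuous_map TY TX ug"
    and ph: "\<And>z. z \<in> topspace TZ \<Longrightarrow> \<pi>TY (uh z) = psi L \<phi>h (\<pi>TZ z)"
    and pg: "\<And>y. y \<in> topspace TY \<Longrightarrow> \<pi>TX (ug y) = psi K \<phi>g (\<pi>TY y)"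
    using h g unfolding bir_mor_def by auto
  have uhT: "\<And>z. z \<in> topspace TZ \<Longrightarrow> uh z \<in> topspace TY"
    using cth unfolding continuous_map_def by blast
  have ugT: "\<And>y. y \<in> topspace TY \<Longrightarrow> ug y \<in> topspace TX"
    using ctg unfolding continuous_map_def by blast
  have PZ: "\<And>z. z \<in> topspace TZ \<Longrightarrow> \<pi>TZ z \<in> Pset \<Gamma> M DM m" using obj_pset[OF hZ] by blast
  have PY: "\<And>y. y \<in> topspace TY \<Longrightarrow> \<pi>TY y \<in> Pset \<Gamma> L DL l" using obj_pset[OF hY] by blast
  have pc: "\<And>W. psi K (\<phi>h \<circ> \<phi>g) W = psi K \<phi>g (psi L \<phi>h W)" using psi_comp[OF emg] by blast
  have pf: "\<And>z. z \<in> topspace TZ \<Longrightarrow> \<pi>TX (ug (uh z)) = psi K (\<phi>h \<circ> \<phi>g) (\<pi>TZ z)"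
    using pg ph uhT pc by simp
  have imgc: "psi K (\<phi>h \<circ> \<phi>g) ` A = psi K \<phi>g ` (psi L \<phi>h ` A)" for A
    using pc by (simp add: image_image)
  let ?FZK = "fibre_prod M (Pset \<Gamma> M DM m) K TX \<pi>TX (\<phi>h \<circ> \<phi>g)"
  let ?FZL = "fibre_prod M (Pset \<Gamma> M DM m) L TY \<pi>TY \<phi>h"
  let ?FYK = "fibre_prod L (Pset \<Gamma> L DL l) K TX \<pi>TX \<phi>g"
  let ?f = "\<lambda>z. ((ug \<circ> uh) z, \<pi>TZ z)"
  let ?h = "\<lambda>z. (uh z, \<pi>TZ z)"
  let ?g = "\<lambda>y. (ug y, \<pi>TY y)"
  have fin: "?f ` topspace TZ \<subseteq> ?FZK"
    unfolding fibre_prod_def using pf uhT ugT PZ by auto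
  have hin: "?h ` topspace TZ \<subseteq> ?FZL"
    unfolding fibre_prod_def using ph uhT PZ by auto
  have gin: "?g ` topspace TY \<subseteq> ?FYK"
    unfolding fibre_prod_def using pg ugT PY by auto
  have hsurj: "\<exists>z\<in>topspace TZ. uh z = y \<and> \<pi>TZ z = W"
    if hp: "bir_proper \<Gamma> M DM m TZ \<pi>TZ L DL l TY \<pi>TY \<phi>h uh" and y: "y \<in> topspace TY"
      and W: "W \<in> Pset \<Gamma> M DM m" "psi L \<phi>h W = \<pi>TY y" for y W
  proof -
    have "(y, W) \<in> ?FZL" unfolding fibre_prod_def using y W by auto
    then have "(y, W) \<in> ?h ` topspace TZ" using hp unfolding bir_proper_def bij_betw_def by simp
    then show ?thesis by force
  qed
  have hsurj2: "\<exists>W\<in>Pset \<Gamma> M DM m. psi L \<phi>h W = \<pi>TY y"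
    if hp: "psi L \<phi>h ` Pset \<Gamma> M DM m = Pset \<Gamma> L DL l" and y: "y \<in> topspace TY" for y
  proof -
    have "\<pi>TY y \<in> psi L \<phi>h ` Pset \<Gamma> M DM m" using hp PY[OF y] by simp
    then show ?thesis by force
  qed
  have P1: "bir_separated \<Gamma> M DM m TZ \<pi>TZ K DK k TX \<pi>TX (\<phi>h \<circ> \<phi>g) (ug \<circ> uh)"
    if gs: "bir_separated \<Gamma> L DL l TY \<pi>TY K DK k TX \<pi>TX \<phi>g ug"
      and hs: "bir_separated \<Gamma> M DM m TZ \<pi>TZ L DL l TY \<pi>TY \<phi>h uh"
    unfolding bir_separated_def inj_on_def
  proof (intro ballI impI)
    fix z1 z2 assume z: "z1 \<in> topspace TZ" "z2 \<in> topspace TZ" "?f z1 = ?f z2"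
    then have "uh z1 = uh z2" using gs uhT ph unfolding bir_separated_def inj_on_def by (metis comp_apply prod.inject)
    then show "z1 = z2" using hs z unfolding bir_separated_def inj_on_def by auto
  qed
  have P2: "bir_separated \<Gamma> M DM m TZ \<pi>TZ L DL l TY \<pi>TY \<phi>h uh"
    if fs: "bir_separated \<Gamma> M DM m TZ \<pi>TZ K DK k TX \<pi>TX (\<phi>h \<circ> \<phi>g) (ug \<circ> uh)"
    using fs unfolding bir_separated_def inj_on_def by (metis comp_apply prod.inject)
  have P6: "bir_separated \<Gamma> L DL l TY \<pi>TY K DK k TX \<pi>TX \<phi>g ug"
    if fs: "bir_separated \<Gamma> M DM m TZ \<pi>TZ K DK k TX \<pi>TX (\<phi>h \<circ> \<phi>g) (ug \<circ> uh)"
      and hp: "bir_proper \<Gamma> M DM m TZ \<pi>TZ L DL l TY \<pi>TY \<phi>h uh"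
    unfolding bir_separated_def inj_on_def
  proof (intro ballI impI)
    fix y1 y2 assume y: "y1 \<in> topspace TY" "y2 \<in> topspace TY" "?g y1 = ?g y2"
    have hp2: "psi L \<phi>h ` Pset \<Gamma> M DM m = Pset \<Gamma> L DL l" using hp unfolding bir_proper_def by blast
    obtain W where W: "W \<in> Pset \<Gamma> M DM m" "psi L \<phi>h W = \<pi>TY y1" using hsurj2[OF hp2 y(1)] by blast
    obtain z1 where z1: "z1 \<in> topspace TZ" "uh z1 = y1" "\<pi>TZ z1 = W" using hsurj[OF hp y(1) W] by blast
    obtain z2 where z2: "z2 \<in> topspace TZ" "uh z2 = y2" "\<pi>TZ z2 = W" using hsurj[OF hp y(2) W(1)] W(2) y(3) by auto
    have "z1 = z2" using fs z1 z2 y(3) unfolding bir_separated_def inj_on_def by auto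
    then show "y1 = y2" using z1 z2 by simp
  qed
  have P3: "bir_proper \<Gamma> M DM m TZ \<pi>TZ K DK k TX \<pi>TX (\<phi>h \<circ> \<phi>g) (ug \<circ> uh)"
    if gp: "bir_proper \<Gamma> L DL l TY \<pi>TY K DK k TX \<pi>TX \<phi>g ug"
      and hp: "bir_proper \<Gamma> M DM m TZ \<pi>TZ L DL l TY \<pi>TY \<phi>h uh"
  proof -
    have gs: "bir_separated \<Gamma> L DL l TY \<pi>TY K DK k TX \<pi>TX \<phi>g ug"
      using gp unfolding bir_proper_def bir_separated_def bij_betw_def by blast
    have hs: "bir_separated \<Gamma> M DM m TZ \<pi>TZ L DL l TY \<pi>TY \<phi>h uh"
      using hp unfolding bir_proper_def bir_separated_def bij_betw_def by blast
    have hp2: "psi L \<phi>h ` Pset \<Gamma> M DM m = Pset \<Gamma> L DL l" using hp unfolding bir_proper_def by blast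
    have gp2: "psi K \<phi>g ` Pset \<Gamma> L DL l = Pset \<Gamma> K DK k" using gp unfolding bir_proper_def by blast
    have "?FZK \<subseteq> ?f ` topspace TZ"
    proof
      fix p assume "p \<in> ?FZK"
      then obtain x W where p: "p = (x, W)" "x \<in> topspace TX" "W \<in> Pset \<Gamma> M DM m"
        "\<pi>TX x = psi K (\<phi>h \<circ> \<phi>g) W" unfolding fibre_prod_def by auto
      have V: "psi L \<phi>h W \<in> Pset \<Gamma> L DL l" using hp2 p(3) by blast
      have "(x, psi L \<phi>h W) \<in> ?FYK" unfolding fibre_prod_def using p V pc by auto
      then have "(x, psi L \<phi>h W) \<in> ?g ` topspace TY" using gp unfolding bir_proper_def bij_betw_def by simp
      then obtain y where y: "y \<in> topspace TY" "ug y = x" "\<pi>TY y = psi L \<phi>h W" by force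
      obtain z where "z \<in> topspace TZ" "uh z = y" "\<pi>TZ z = W" using hsurj[OF hp y(1) p(3) y(3)[symmetric]] by blast
      then show "p \<in> ?f ` topspace TZ" using p y by force
    qed
    then have "bij_betw ?f (topspace TZ) ?FZK"
      using fin P1[OF gs hs] unfolding bij_betw_def bir_separated_def by blast
    moreover have "psi K (\<phi>h \<circ> \<phi>g) ` Pset \<Gamma> M DM m = Pset \<Gamma> K DK k" using imgc hp2 gp2 by simp
    ultimately show ?thesis unfolding bir_proper_def by simp
  qed
  have P4: "bir_proper \<Gamma> L DL l TY \<pi>TY K DK k TX \<pi>TX \<phi>g ug"
    if fp: "bir_proper \<Gamma> M DM m TZ \<pi>TZ K DK k TX \<pi>TX (\<phi>h \<circ> \<phi>g) (ug \<circ> uh)"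
      and hp: "bir_proper \<Gamma> M DM m TZ \<pi>TZ L DL l TY \<pi>TY \<phi>h uh"
  proof -
    have fs: "bir_separated \<Gamma> M DM m TZ \<pi>TZ K DK k TX \<pi>TX (\<phi>h \<circ> \<phi>g) (ug \<circ> uh)"
      using fp unfolding bir_proper_def bir_separated_def bij_betw_def by blast
    have hp2: "psi L \<phi>h ` Pset \<Gamma> M DM m = Pset \<Gamma> L DL l" using hp unfolding bir_proper_def by blast
    have fp2: "psi K (\<phi>h \<circ> \<phi>g) ` Pset \<Gamma> M DM m = Pset \<Gamma> K DK k" using fp unfolding bir_proper_def by blast
    have "?FYK \<subseteq> ?g ` topspace TY"
    proof
      fix p assume "p \<in> ?FYK"
      then obtain x V where p: "p = (x, V)" "x \<in> topspace TX" "V \<in> Pset \<Gamma> L DL l"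
        "\<pi>TX x = psi K \<phi>g V" unfolding fibre_prod_def by auto
      have "V \<in> psi L \<phi>h ` Pset \<Gamma> M DM m" using hp2 p(3) by simp
      then obtain W where W: "W \<in> Pset \<Gamma> M DM m" "psi L \<phi>h W = V" by (auto elim!: imageE)
      have "(x, W) \<in> ?FZK" unfolding fibre_prod_def using p W pc by auto
      then have "(x, W) \<in> ?f ` topspace TZ" using fp unfolding bir_proper_def bij_betw_def by simp
      then obtain z where z: "z \<in> topspace TZ" "ug (uh z) = x" "\<pi>TZ z = W" by force
      have "\<pi>TY (uh z) = V" using ph[OF z(1)] z W by simp
      then show "p \<in> ?g ` topspace TY" using p z uhT by force
    qed
    then have "bij_betw ?g (topspace TY) ?FYK"
      using gin P6[OF fs hp] unfolding bij_betw_def bir_separated_def by blast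
    moreover have "psi K \<phi>g ` Pset \<Gamma> L DL l = Pset \<Gamma> K DK k" using imgc hp2 fp2 by metis
    ultimately show ?thesis unfolding bir_proper_def by simp
  qed
  have P5: "bir_proper \<Gamma> M DM m TZ \<pi>TZ L DL l TY \<pi>TY \<phi>h uh"
    if fp: "bir_proper \<Gamma> M DM m TZ \<pi>TZ K DK k TX \<pi>TX (\<phi>h \<circ> \<phi>g) (ug \<circ> uh)"
      and gs: "bir_separated \<Gamma> L DL l TY \<pi>TY K DK k TX \<pi>TX \<phi>g ug"
      and hp2: "psi L \<phi>h ` Pset \<Gamma> M DM m = Pset \<Gamma> L DL l"
  proof -
    have fs: "bir_separated \<Gamma> M DM m TZ \<pi>TZ K DK k TX \<pi>TX (\<phi>h \<circ> \<phi>g) (ug \<circ> uh)"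
      using fp unfolding bir_proper_def bir_separated_def bij_betw_def by blast
    have "?FZL \<subseteq> ?h ` topspace TZ"
    proof
      fix p assume "p \<in> ?FZL"
      then obtain y W where p: "p = (y, W)" "y \<in> topspace TY" "W \<in> Pset \<Gamma> M DM m"
        "\<pi>TY y = psi L \<phi>h W" unfolding fibre_prod_def by auto
      have "(ug y, W) \<in> ?FZK" unfolding fibre_prod_def using p pc pg ugT by auto
      then have "(ug y, W) \<in> ?f ` topspace TZ" using fp unfolding bir_proper_def bij_betw_def by simp
      then obtain z where z: "z \<in> topspace TZ" "ug (uh z) = ug y" "\<pi>TZ z = W" by force
      have "\<pi>TY (uh z) = \<pi>TY y" using ph[OF z(1)] z p by simp
      then have "uh z = y" using gs z p(2) uhT unfolding bir_separated_def inj_on_def by blast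
      then show "p \<in> ?h ` topspace TZ" using p z by force
    qed
    then have "bij_betw ?h (topspace TZ) ?FZL"
      using hin P2[OF fs] unfolding bij_betw_def bir_separated_def by blast
    then show ?thesis unfolding bir_proper_def using hp2 by simp
  qed
  show ?thesis using P1 P2 P3 P4 P5 P6 by blast
qed

end
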